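(* Let $V$ be a finite totally ordered set and let $w_1, w_2$ be derangements of $V$ each having exactly $k$ disjoint cycles. If $\theta(w_1) \le \theta(w_2)$ in the componentwise (cartesian product) order on $(\mathbb{Z}_+)^{|V|-k}$, then $f(w_1) \le f(w_2)$ and $r(w_1) \le r(w_2)$.
   Context: A derangement of $V$ is a fixed-point-free permutation of $V$. For a permutation $w$ of $V$ and $t \in V$, define $\rho_w(t) = \{t, w(t), \ldots, w^{k-1}(t)\}$, where $k$ is the smallest positive integer with $w^k(t) \le t$, and define $\lambda_w(t) = w^{-\ell}(t)$, where $\ell$ is the smallest positive integer with $w^{-\ell}(t) \le t$. Let $U(w)$ be the set of elements of $V$ that are not minimal in their $w$-cycle (so $|U(w)| = |V| - k$ if $w$ has $k$ cycles). $\theta(w) \in (\mathbb{Z}_+)^{|V|-k}$ is the tuple of the numbers $|\rho_w(t)|$ for $t \in U(w)$ (with multiplicity), listed in non-decreasing order. For a simple graph $G$ with vertex set $V$, the derangement set $\mathcal{D}(G)$ is the set of permutations $w$ of $V$ such that for every vertex $t$, $\lambda_w(t)$ is adjacent in $G$ to some vertex of $\rho_w(t)$. The frequency $f(w)$ is the number of simple graphs $G$ on vertex set $V$ with $w \in \mathcal{D}(G)$, and the rate is $r(w) = f(w)/2^{\binom{|V|}{2}}$. *)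

theory Defs
  imports Complex_Main "HOL-Combinatorics.Permutations"
begin

definition derangement :: "'a set \<Rightarrow> ('a \<Rightarrow> 'a) \<Rightarrow> bool" where
  "derangement V w \<longleftrightarrow> w permutes V \<and> (\<forall>x\<in>V. w x \<noteq> x)"

definition wcycle :: "('a \<Rightarrow> 'a) \<Rightarrow> 'a \<Rightarrow> 'a set" where
  "wcycle w t = {(w ^^ n) t | n. True}"

definition num_cycles :: "'a set \<Rightarrow> ('a \<Rightarrow> 'a) \<Rightarrow> nat" where
  "num_cycles V w = card (wcycle w ` V)"

definition rho_len :: "('a::linorder \<Rightarrow> 'a) \<Rightarrow> 'a \<Rightarrow> nat" where
  "rho_len w t = (LEAST k. 0 < k \<and> (w ^^ k) t \<le> t)"

definition rho :: "('a::linorder \<Rightarrow> 'a) \<Rightarrow> 'a \<Rightarrow> 'a set" where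
  "rho w t = {(w ^^ i) t | i. i < rho_len w t}"

definition lam :: "('a::linorder \<Rightarrow> 'a) \<Rightarrow> 'a \<Rightarrow> 'a" where
  "lam w t = (inv w ^^ (LEAST l. 0 < l \<and> (inv w ^^ l) t \<le> t)) t"

definition Uset :: "'a::linorder set \<Rightarrow> ('a \<Rightarrow> 'a) \<Rightarrow> 'a set" where
  "Uset V w = {t\<in>V. \<exists>s\<in>wcycle w t. s < t}"

definition theta :: "'a::linorder set \<Rightarrow> ('a \<Rightarrow> 'a) \<Rightarrow> nat list" where
  "theta V w = sort (map (\<lambda>t. card (rho w t)) (sorted_list_of_set (Uset V w)))"

definition simple_graphs :: "'a set \<Rightarrow> 'a set set set" where
  "simple_graphs V = Pow {e. e \<subseteq> V \<and> card e = 2}"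

definition adj :: "'a set set \<Rightarrow> 'a \<Rightarrow> 'a \<Rightarrow> bool" where
  "adj E u v \<longleftrightarrow> {u, v} \<in> E"

definition in_derangement_set :: "'a::linorder set \<Rightarrow> 'a set set \<Rightarrow> ('a \<Rightarrow> 'a) \<Rightarrow> bool" where
  "in_derangement_set V E w \<longleftrightarrow> w permutes V \<and>
     (\<forall>t\<in>V. \<exists>x\<in>rho w t. adj E (lam w t) x)"

definition freq :: "'a::linorder set \<Rightarrow> ('a \<Rightarrow> 'a) \<Rightarrow> nat" where
  "freq V w = card {E \<in> simple_graphs V. in_derangement_set V E w}"

definition rate :: "'a::linorder set \<Rightarrow> ('a \<Rightarrow> 'a) \<Rightarrow> real" where
  "rate V w = real (freq V w) / 2 ^ (card V choose 2)"

end

theory Submission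
  imports Defs
begin


lemma count_hit:
  fixes A :: "'i \<Rightarrow> 'e set"
  assumes "finite I"
  shows "finite E \<Longrightarrow> (\<forall>i\<in>I. A i \<subseteq> E) \<Longrightarrow> (\<forall>i\<in>I. \<forall>j\<in>I. i \<noteq> j \<longrightarrow> A i \<inter> A j = {}) \<Longrightarrow>
    card {G. G \<subseteq> E \<and> (\<forall>i\<in>I. G \<inter> A i \<noteq> {})} * 2^(\<Sum>i\<in>I. card (A i))
      = 2^card E * (\<Prod>i\<in>I. 2^card (A i) - 1)"
  using assms
proof (induction I arbitrary: E rule: finite_induct)
  case empty
  have "{G. G \<subseteq> E} = Pow E" by auto
  then show ?case using empty by (simp add: card_Pow)
next
  case (insert i I)
  define S' where "S' = {G. G \<subseteq> E - A i \<and> (\<forall>j\<in>I. G \<inter> A j \<noteq> {})}"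
  define H where "H = {H. H \<subseteq> A i \<and> H \<noteq> {}}"
  have sub: "\<forall>j\<in>I. A j \<subseteq> E - A i"
  proof
    fix j assume j: "j \<in> I"
    then have "j \<noteq> i" using insert.hyps(2) by auto
    then have "A j \<inter> A i = {}" using insert.prems(3) j by auto
    moreover have "A j \<subseteq> E" using insert.prems(2) j by auto
    ultimately show "A j \<subseteq> E - A i" by auto
  qed
  have IH: "card S' * 2^(\<Sum>j\<in>I. card (A j)) = 2^card (E - A i) * (\<Prod>j\<in>I. 2^card (A j) - 1)"
    unfolding S'_def using insert.IH[of "E - A i"] insert.prems sub by auto
  have Ai: "A i \<subseteq> E" using insert.prems by auto
  have finAi: "finite (A i)" using Ai insert.prems finite_subset by blast
  have eq: "{G. G \<subseteq> E \<and> (\<forall>j\<in>insert i I. G \<inter> A j \<noteq> {})} = (\<lambda>(X,Y). X \<union> Y) ` (H \<times> S')"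
  proof
    show "{G. G \<subseteq> E \<and> (\<forall>j\<in>insert i I. G \<inter> A j \<noteq> {})} \<subseteq> (\<lambda>(X,Y). X \<union> Y) ` (H \<times> S')"
    proof
      fix G assume G: "G \<in> {G. G \<subseteq> E \<and> (\<forall>j\<in>insert i I. G \<inter> A j \<noteq> {})}"
      have "(G \<inter> A i, G - A i) \<in> H \<times> S'"
        using G sub unfolding H_def S'_def by blast
      moreover have "G = (\<lambda>(X,Y). X \<union> Y) (G \<inter> A i, G - A i)" by auto
      ultimately show "G \<in> (\<lambda>(X,Y). X \<union> Y) ` (H \<times> S')" by blast
    qed
    show "(\<lambda>(X,Y). X \<union> Y) ` (H \<times> S') \<subseteq> {G. G \<subseteq> E \<and> (\<forall>j\<in>insert i I. G \<inter> A j \<noteq> {})}"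
      using Ai unfolding H_def S'_def by blast
  qed
  have inj: "inj_on (\<lambda>(X,Y). X \<union> Y) (H \<times> S')"
  proof (rule inj_onI, clarsimp)
    fix X Y X' Y' assume "X \<in> H" "Y \<in> S'" "X' \<in> H" "Y' \<in> S'" "X \<union> Y = X' \<union> Y'"
    then show "X = X' \<and> Y = Y'" unfolding H_def S'_def by blast
  qed
  have cH: "card H = 2^card (A i) - 1"
  proof -
    have "H = Pow (A i) - {{}}" unfolding H_def by auto
    then show ?thesis using finAi by (simp add: card_Pow)
  qed
  have cE: "card (E - A i) = card E - card (A i)" using Ai finAi by (simp add: card_Diff_subset)
  have le: "card (A i) \<le> card E" using Ai insert.prems card_mono by blast
  have "card {G. G \<subseteq> E \<and> (\<forall>j\<in>insert i I. G \<inter> A j \<noteq> {})} = card H * card S'"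
    using eq inj card_image card_cartesian_product by metis
  then have "card {G. G \<subseteq> E \<and> (\<forall>j\<in>insert i I. G \<inter> A j \<noteq> {})} * 2^(\<Sum>j\<in>insert i I. card (A j))
     = (2^card (A i) - 1) * 2^card (A i) * (card S' * 2^(\<Sum>j\<in>I. card (A j)))"
    using insert.hyps cH by (simp add: power_add)
  also have "\<dots> = (2^card (A i) - 1) * (2^card (A i) * 2^(card E - card (A i))) * (\<Prod>j\<in>I. 2^card (A j) - 1)"
    using IH cE by simp
  also have "2^card (A i) * 2^(card E - card (A i)) = (2::nat)^card E"
    using le by (simp flip: power_add)
  finally show ?case using insert.hyps by simp
qed



lemma ret:
  assumes "w permutes V" "finite V"
  obtains n where "n > 0" "(w ^^ n) t = t"
proof -
  have "permutation w" using assms permutation_permutes by blast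
  then obtain n where "n > 0" "(w ^^ n) t = t" by (rule permutation_self)
  then show ?thesis using that by blast
qed

lemma cancel1:
  assumes "w permutes V"
  shows "(w ^^ n) ((inv w ^^ n) x) = x"
proof (induction n arbitrary: x)
  case 0 then show ?case by simp
next
  case (Suc n)
  have "(w ^^ Suc n) ((inv w ^^ Suc n) x) = (w ^^ n) (w (inv w ((inv w ^^ n) x)))"
    by (simp only: funpow_Suc_right[of n w] funpow.simps(2)[of n "inv w"] o_apply)
  also have "\<dots> = x" using Suc permutes_inverses(1)[OF assms] by simp
  finally show ?case .
qed

lemma cancel2:
  assumes "w permutes V"
  shows "(inv w ^^ n) ((w ^^ n) x) = x"
proof (induction n arbitrary: x)
  case 0 then show ?case by simp
next
  case (Suc n)
  have "(inv w ^^ Suc n) ((w ^^ Suc n) x) = (inv w ^^ n) (inv w (w ((w ^^ n) x)))"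
    by (simp only: funpow_Suc_right[of n "inv w"] funpow.simps(2)[of n w] o_apply)
  also have "\<dots> = x" using Suc permutes_inverses(2)[OF assms] by simp
  finally show ?case .
qed

lemma inv_in_cycle:
  assumes "w permutes V" "finite V"
  shows "\<exists>n. (inv w ^^ j) t = (w ^^ n) t"
proof -
  obtain N where N: "N > 0" "(w ^^ N) t = t" using ret[OF assms] by blast
  have p: "(w ^^ (N*j)) t = t"
  proof (induction j)
    case 0 then show ?case by simp
  next
    case (Suc j)
    have "(w ^^ (N * Suc j)) t = (w ^^ N) ((w ^^ (N*j)) t)"
      by (simp only: mult_Suc_right funpow_add o_apply)
    then show ?case using Suc N(2) by simp
  qed
  have "j \<le> N * j" using N(1) by simp
  then have jj: "N * j = j + (N*j - j)" by simp
  have "(w ^^ (j + (N*j - j))) t = (w ^^ j) ((w ^^ (N*j - j)) t)"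
    by (simp only: funpow_add o_apply)
  then have "(w ^^ j) ((w ^^ (N*j - j)) t) = t" using p jj by metis
  then have "(inv w ^^ j) ((w ^^ j) ((w ^^ (N*j - j)) t)) = (inv w ^^ j) t" by simp
  then have "(inv w ^^ j) t = (w ^^ (N*j - j)) t" using cancel2[OF assms(1)] by simp
  then show ?thesis by blast
qed

lemma rho_props:
  assumes "w permutes V" "finite V"
  shows "0 < rho_len w t" "(w ^^ rho_len w t) t \<le> t"
    "\<And>i. 0 < i \<Longrightarrow> i < rho_len w t \<Longrightarrow> t < (w ^^ i) t"
proof -
  obtain N where N: "N > 0" "(w ^^ N) t = t" using ret[OF assms] by blast
  then have ex: "\<exists>k. 0 < k \<and> (w ^^ k) t \<le> t" by auto
  show "0 < rho_len w t" "(w ^^ rho_len w t) t \<le> t"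
    using LeastI_ex[OF ex] unfolding rho_len_def by auto
  fix i assume "0 < i" "i < rho_len w t"
  then show "t < (w ^^ i) t" using not_less_Least[of i "\<lambda>k. 0 < k \<and> (w ^^ k) t \<le> t"]
    unfolding rho_len_def by auto
qed

definition lexp :: "('a::linorder \<Rightarrow> 'a) \<Rightarrow> 'a \<Rightarrow> nat" where
  "lexp w t = (LEAST l. 0 < l \<and> (inv w ^^ l) t \<le> t)"

lemma lam_props:
  assumes "w permutes V" "finite V"
  shows "0 < lexp w t" "lam w t = (inv w ^^ lexp w t) t" "lam w t \<le> t"
    "\<And>i. 0 < i \<Longrightarrow> i < lexp w t \<Longrightarrow> t < (inv w ^^ i) t"
proof -
  have iv: "inv w permutes V" using assms(1) by (rule permutes_inv)
  obtain N where N: "N > 0" "(inv w ^^ N) t = t" using ret[OF iv assms(2)] by blast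
  then have ex: "\<exists>k. 0 < k \<and> (inv w ^^ k) t \<le> t" by auto
  show "0 < lexp w t" "lam w t = (inv w ^^ lexp w t) t" "lam w t \<le> t"
    using LeastI_ex[OF ex] unfolding lexp_def lam_def by auto
  fix i assume "0 < i" "i < lexp w t"
  then show "t < (inv w ^^ i) t" using not_less_Least[of i "\<lambda>k. 0 < k \<and> (inv w ^^ k) t \<le> t"]
    unfolding lexp_def by auto
qed

lemma pos_lam:
  assumes "w permutes V" "finite V" "j \<le> lexp w t"
  shows "(w ^^ j) (lam w t) = (inv w ^^ (lexp w t - j)) t"
proof -
  have "lam w t = (inv w ^^ j) ((inv w ^^ (lexp w t - j)) t)"
    using lam_props(2)[OF assms(1,2)] assms(3)
    by (metis funpow_add le_add_diff_inverse o_apply)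
  then show ?thesis using cancel1[OF assms(1)] by metis
qed

lemma key:
  assumes "w permutes V" "finite V" "t \<in> Uset V w"
  shows "lam w t < t"
proof (rule ccontr)
  assume "\<not> lam w t < t"
  then have a: "lam w t = t" using lam_props(3)[OF assms(1,2), of t] by auto
  define q where "q = lexp w t"
  have q: "q > 0" using lam_props[OF assms(1,2)] q_def by auto
  have wq: "(w ^^ q) t = t" using pos_lam[OF assms(1,2), where j=q and t=t] a q_def by simp
  have ge: "t \<le> (w ^^ n) t" for n
  proof -
    have "(w ^^ (n mod q)) t = (w ^^ n) t" using funpow_mod_eq wq by metis
    moreover have "t \<le> (w ^^ (n mod q)) t"
    proof (cases "n mod q = 0")
      case True then show ?thesis by simp
    next
      case False
      have "n mod q < q" using q by simp
      then have "(w ^^ (n mod q)) t = (inv w ^^ (q - n mod q)) t"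
        using pos_lam[OF assms(1,2), where j="n mod q" and t=t] a q_def by simp
      moreover have "t < (inv w ^^ (q - n mod q)) t"
        using lam_props(4)[OF assms(1,2)] False \<open>n mod q < q\<close> q_def by simp
      ultimately show ?thesis by simp
    qed
    ultimately show ?thesis by simp
  qed
  from assms(3) obtain s where "s \<in> wcycle w t" "s < t" unfolding Uset_def by auto
  then show False using ge unfolding wcycle_def by (auto simp: not_less[symmetric])
qed

lemma key2:
  assumes "w permutes V" "finite V" "x \<in> rho w t"
  shows "\<exists>m q. 0 < q \<and> q \<le> m \<and> (w ^^ q) (lam w t) = t \<and> (w ^^ m) (lam w t) = x \<and>
     (\<forall>j. 0 < j \<and> j \<le> m \<longrightarrow> t \<le> (w ^^ j) (lam w t))"
proof -
  define q where "q = lexp w t"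
  obtain i where i: "x = (w ^^ i) t" "i < rho_len w t" using assms(3) unfolding rho_def by auto
  have q: "q > 0" using lam_props[OF assms(1,2)] q_def by auto
  have wq: "(w ^^ q) (lam w t) = t" using pos_lam[OF assms(1,2), where j=q and t=t] q_def by simp
  have wm: "(w ^^ (i + q)) (lam w t) = x" using wq i by (simp add: funpow_add)
  have "t \<le> (w ^^ j) (lam w t)" if "0 < j" "j \<le> i + q" for j
  proof (cases "j \<le> q")
    case True
    then have e: "(w ^^ j) (lam w t) = (inv w ^^ (q - j)) t" using pos_lam[OF assms(1,2)] q_def by simp
    show ?thesis
    proof (cases "j = q")
      case True then show ?thesis using e by simp
    next
      case False
      then show ?thesis using e lam_props(4)[OF assms(1,2), where i="q-j" and t=t] True that q_def by simp
    qed
  next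
    case False
    then have jj: "j = (j - q) + q" by simp
    have "(w ^^ ((j - q) + q)) (lam w t) = (w ^^ (j - q)) ((w ^^ q) (lam w t))"
      by (simp add: funpow_add)
    then have "(w ^^ j) (lam w t) = (w ^^ (j - q)) t" using wq jj by simp
    moreover have "t < (w ^^ (j - q)) t" using rho_props(3)[OF assms(1,2), where i="j-q" and t=t] False that i by simp
    ultimately show ?thesis by simp
  qed
  then have "\<forall>j. 0 < j \<and> j \<le> i + q \<longrightarrow> t \<le> (w ^^ j) (lam w t)" by blast
  then show ?thesis using q wq wm by (intro exI[of _ "i+q"] exI[of _ q]) simp
qed



lemma minimal_case:
  assumes "w permutes V" "finite V" "\<forall>x\<in>V. w x \<noteq> x" "t \<in> V" "t \<notin> Uset V w"
  shows "w t \<in> Uset V w" "lam w (w t) = t" "lam w t = t" "rho w (w t) \<subseteq> rho w t"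
proof -
  have ge: "t \<le> (w ^^ n) t" for n
    using assms(4,5) unfolding Uset_def wcycle_def by (auto simp: not_less[symmetric])
  have wtV: "w t \<in> V" using assms(1,4) permutes_in_image by metis
  have wt: "w t \<noteq> t" using assms(3,4) by auto
  have lt: "t < w t" using ge[of 1] wt by simp
  obtain N where N: "N > 0" "(w ^^ N) t = t" using ret[OF assms(1,2)] by blast
  have "(w ^^ (N - 1)) (w t) = (w ^^ Suc (N - 1)) t" by (simp only: funpow_Suc_right o_apply)
  also have "\<dots> = t" using N by simp
  finally have "t \<in> wcycle w (w t)" unfolding wcycle_def by (metis (mono_tags, lifting) mem_Collect_eq)
  then show "w t \<in> Uset V w" using wtV lt unfolding Uset_def by blast
  have "lexp w (w t) = 1"
    unfolding lexp_def
  proof (rule Least_equality)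
    show "0 < (1::nat) \<and> (inv w ^^ 1) (w t) \<le> w t"
      using permutes_inverses(2)[OF assms(1)] lt by simp
  qed simp
  then show "lam w (w t) = t" using lam_props(2)[OF assms(1,2), of "w t"]
    permutes_inverses(2)[OF assms(1)] by simp
  obtain n where "lam w t = (w ^^ n) t"
    using inv_in_cycle[OF assms(1,2)] lam_props(2)[OF assms(1,2), of t] by metis
  then show "lam w t = t" using ge[of n] lam_props(3)[OF assms(1,2), of t] by simp
  define p where "p = rho_len w t"
  have wp: "(w ^^ p) t = t" using rho_props(2)[OF assms(1,2), of t] ge[of p] p_def by simp
  have "p \<noteq> 1" using wp wt by auto
  then have p2: "p \<ge> 2" using rho_props(1)[OF assms(1,2), of t] p_def by simp
  have "(w ^^ (p - 1)) (w t) = (w ^^ Suc (p - 1)) t" by (simp only: funpow_Suc_right o_apply)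
  also have "\<dots> = t" using wp p2 by simp
  finally have "0 < p - 1 \<and> (w ^^ (p - 1)) (w t) \<le> w t" using p2 lt by simp
  then have rl: "rho_len w (w t) \<le> p - 1" unfolding rho_len_def by (rule Least_le)
  show "rho w (w t) \<subseteq> rho w t"
  proof
    fix x assume "x \<in> rho w (w t)"
    then obtain i where i: "x = (w ^^ i) (w t)" "i < rho_len w (w t)" unfolding rho_def by auto
    have "x = (w ^^ Suc i) t" using i(1) by (simp only: funpow_Suc_right o_apply)
    moreover have "Suc i < rho_len w t" using i(2) rl p2 p_def by simp
    ultimately show "x \<in> rho w t" unfolding rho_def by blast
  qed
qed

lemma same_end:
  fixes w :: "'a::linorder \<Rightarrow> 'a"
  assumes "w permutes V" "(w^^m) a = x" "(w^^m') a = x" "m \<le> m'"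
   "(w^^q) a = t" "(w^^q') a = t'" "0<q" "q \<le> m" "0<q'" "q' \<le> m'"
   "\<forall>j. 0<j \<and> j \<le> m \<longrightarrow> t \<le> (w^^j) a" "\<forall>j. 0<j \<and> j\<le>m' \<longrightarrow> t' \<le> (w^^j) a" "a < t'"
  shows "t = t'"
proof (cases "m = m'")
  case True
  have "t \<le> t'" using assms(6,9,10,11) True by force
  moreover have "t' \<le> t" using assms(5,7,8,12) True by force
  ultimately show ?thesis by simp
next
  case False
  define d where "d = m' - m"
  have d: "0 < d" "d \<le> m'" using False assms(4) d_def by auto
  have "(w ^^ (m + d)) a = (w ^^ m) ((w ^^ d) a)" by (simp only: funpow_add o_apply)
  moreover have "m + d = m'" using assms(4) d_def by simp
  ultimately have "(w ^^ m) ((w ^^ d) a) = (w ^^ m) a" using assms(2,3) by simp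
  then have "(inv w ^^ m) ((w ^^ m) ((w ^^ d) a)) = (inv w ^^ m) ((w ^^ m) a)" by simp
  then have "(w ^^ d) a = a" using cancel2[OF assms(1)] by simp
  moreover have "t' \<le> (w ^^ d) a" using assms(12) d by blast
  ultimately show ?thesis using assms(13) by simp
qed

definition Aset :: "('a::linorder \<Rightarrow> 'a) \<Rightarrow> 'a \<Rightarrow> 'a set set" where
  "Aset w t = (\<lambda>x. {lam w t, x}) ` rho w t"

lemma equiv:
  assumes "w permutes V" "finite V" "\<forall>x\<in>V. w x \<noteq> x"
  shows "in_derangement_set V G w \<longleftrightarrow> (\<forall>t\<in>Uset V w. G \<inter> Aset w t \<noteq> {})"
proof -
  have one: "(\<exists>x\<in>rho w t. adj G (lam w t) x) \<longleftrightarrow> G \<inter> Aset w t \<noteq> {}" for t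
    unfolding Aset_def adj_def by blast
  have "(\<forall>t\<in>V. \<exists>x\<in>rho w t. adj G (lam w t) x) \<longleftrightarrow> (\<forall>t\<in>Uset V w. \<exists>x\<in>rho w t. adj G (lam w t) x)"
  proof
    assume "\<forall>t\<in>V. \<exists>x\<in>rho w t. adj G (lam w t) x"
    then show "\<forall>t\<in>Uset V w. \<exists>x\<in>rho w t. adj G (lam w t) x" unfolding Uset_def by blast
  next
    assume H: "\<forall>t\<in>Uset V w. \<exists>x\<in>rho w t. adj G (lam w t) x"
    show "\<forall>t\<in>V. \<exists>x\<in>rho w t. adj G (lam w t) x"
    proof
      fix t assume t: "t \<in> V"
      show "\<exists>x\<in>rho w t. adj G (lam w t) x"
      proof (cases "t \<in> Uset V w")
        case True then show ?thesis using H by blast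
      next
        case False
        note m = minimal_case[OF assms t False]
        then obtain x where "x \<in> rho w (w t)" "adj G (lam w (w t)) x" using H by blast
        then show ?thesis using m by auto
      qed
    qed
  qed
  then show ?thesis unfolding in_derangement_set_def using assms(1) one by simp
qed

lemma disj:
  assumes "w permutes V" "finite V" "t \<in> Uset V w" "t' \<in> Uset V w" "t \<noteq> t'"
  shows "Aset w t \<inter> Aset w t' = {}"
proof (rule ccontr)
  assume "Aset w t \<inter> Aset w t' \<noteq> {}"
  then obtain x x' where x: "x \<in> rho w t" and x': "x' \<in> rho w t'"
    and eq: "{lam w t, x} = {lam w t', x'}" unfolding Aset_def by blast
  define a where "a = lam w t"
  define a' where "a' = lam w t'"
  have alt: "a < t" using key[OF assms(1,2,3)] a_def by simp
  have alt': "a' < t'" using key[OF assms(1,2,4)] a'_def by simp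
  from key2[OF assms(1,2) x] obtain m q where mq: "0 < q" "q \<le> m" "(w ^^ q) a = t" "(w ^^ m) a = x"
     "\<forall>j. 0 < j \<and> j \<le> m \<longrightarrow> t \<le> (w ^^ j) a" unfolding a_def by blast
  from key2[OF assms(1,2) x'] obtain m' q' where mq': "0 < q'" "q' \<le> m'" "(w ^^ q') a' = t'" "(w ^^ m') a' = x'"
     "\<forall>j. 0 < j \<and> j \<le> m' \<longrightarrow> t' \<le> (w ^^ j) a'" unfolding a'_def by blast
  have "t \<le> (w ^^ m) a" using mq(5) mq(1,2) by simp
  then have xa: "a < x" using mq(4) alt by simp
  have "t' \<le> (w ^^ m') a'" using mq'(5) mq'(1,2) by simp
  then have xa': "a' < x'" using mq'(4) alt' by simp
  from eq have "(a = a' \<and> x = x') \<or> (a = x' \<and> x = a')" unfolding a_def a'_def by (simp add: doubleton_eq_iff)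
  then show False
  proof
    assume c: "a = a' \<and> x = x'"
    show False
    proof (cases "m \<le> m'")
      case True
      have "t = t'" by (rule same_end[OF assms(1), of m a x m' q t q' t']) (use mq mq' c alt' True in simp_all)
      then show False using assms(5) by simp
    next
      case False
      have "t' = t" by (rule same_end[OF assms(1), of m' a x m q' t' q t]) (use mq mq' c alt False in simp_all)
      then show False using assms(5) by simp
    qed
  next
    assume "a = x' \<and> x = a'"
    then show False using xa xa' by simp
  qed
qed



lemma prod_theta_aux:
  fixes g :: "nat \<Rightarrow> real"
  shows "prod_list (map g (sort xs)) = prod_list (map g xs)"
proof -
  have "prod_list (map g (sort xs)) = prod_mset (mset (map g (sort xs)))" by (simp only: prod_mset_prod_list)
  also have "\<dots> = prod_mset (mset (map g xs))" by simp
  also have "\<dots> = prod_list (map g xs)" by (simp only: prod_mset_prod_list)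
  finally show ?thesis .
qed

lemma prod_theta:
  fixes g :: "nat \<Rightarrow> real" and V :: "'a::linorder set"
  assumes "finite V"
  shows "prod_list (map g (theta V w)) = (\<Prod>t\<in>Uset V w. g (card (rho w t)))"
proof -
  have fin: "finite (Uset V w)" using assms unfolding Uset_def by simp
  have "prod_list (map g (theta V w)) = prod_list (map (\<lambda>t. g (card (rho w t))) (sorted_list_of_set (Uset V w)))"
    unfolding theta_def prod_theta_aux by (simp add: comp_def)
  also have "\<dots> = (\<Prod>t\<in>set (sorted_list_of_set (Uset V w)). g (card (rho w t)))"
    by (simp add: prod.distinct_set_conv_list)
  also have "\<dots> = (\<Prod>t\<in>Uset V w. g (card (rho w t)))" using fin by simp
  finally show ?thesis .
qed

lemma mono_prod:
  assumes "list_all2 (\<le>) xs ys"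
  shows "prod_list (map (\<lambda>c. 1 - 1 / 2 ^ c :: real) xs) \<le> prod_list (map (\<lambda>c. 1 - 1 / 2 ^ c :: real) ys)"
  using assms
proof (induction rule: list_all2_induct)
  case Nil then show ?case by simp
next
  case (Cons x xs y ys)
  have g0: "0 \<le> 1 - 1 / (2::real) ^ c" for c :: nat
  proof -
    have "(1::real) \<le> 2 ^ c" by simp
    then show ?thesis by (simp add: field_simps)
  qed
  have gm: "1 - 1 / 2 ^ x \<le> (1 - 1 / 2 ^ y :: real)"
  proof -
    have "(2::real) ^ x \<le> 2 ^ y" using Cons(1) by (simp add: power_increasing)
    then have "1 / (2::real) ^ y \<le> 1 / 2 ^ x" by (simp add: frac_le)
    then show ?thesis by simp
  qed
  have p0: "0 \<le> prod_list (map (\<lambda>c. 1 - 1 / 2 ^ c :: real) xs)"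
    by (induction xs) (simp_all add: g0)
  show ?case using Cons(3) gm g0 p0 by (simp add: mult_mono)
qed

definition Ed :: "'a set \<Rightarrow> 'a set set" where
  "Ed V = {e. e \<subseteq> V \<and> card e = 2}"

lemma Aset_props:
  assumes "w permutes V" "finite V" "t \<in> Uset V w"
  shows "Aset w t \<subseteq> Ed V" "card (Aset w t) = card (rho w t)"
proof -
  have tV: "t \<in> V" using assms(3) unfolding Uset_def by simp
  have iv: "inv w permutes V" using assms(1) by (rule permutes_inv)
  have aV: "lam w t \<in> V" using lam_props(2)[OF assms(1,2), of t] permutes_in_funpow_image[OF iv tV] by simp
  have rV: "rho w t \<subseteq> V" unfolding rho_def using permutes_in_funpow_image[OF assms(1) tV] by blast
  have ne: "x \<noteq> lam w t" if x: "x \<in> rho w t" for x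
  proof -
    from key2[OF assms(1,2) x] obtain m q where mq: "0 < q" "q \<le> m" "(w ^^ m) (lam w t) = x"
     "\<forall>j. 0 < j \<and> j \<le> m \<longrightarrow> t \<le> (w ^^ j) (lam w t)" by blast
    have "t \<le> x" using mq(4) mq(1,2) mq(3) by auto
    then show ?thesis using key[OF assms] by simp
  qed
  show "Aset w t \<subseteq> Ed V"
  proof
    fix e assume "e \<in> Aset w t"
    then obtain x where x: "x \<in> rho w t" "e = {lam w t, x}" unfolding Aset_def by blast
    then show "e \<in> Ed V" unfolding Ed_def using ne[OF x(1)] aV rV by auto
  qed
  have "inj_on (\<lambda>x. {lam w t, x}) (rho w t)"
    by (rule inj_onI) (use ne in \<open>auto simp: doubleton_eq_iff\<close>)
  then show "card (Aset w t) = card (rho w t)" unfolding Aset_def by (rule card_image)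
qed

lemma freq_nat:
  fixes V :: "'a::linorder set"
  assumes "derangement V w" "finite V"
  shows "freq V w * 2^(\<Sum>t\<in>Uset V w. card (rho w t)) = 2^card (Ed V) * (\<Prod>t\<in>Uset V w. 2^card (rho w t) - 1)"
proof -
  have perm: "w permutes V" and der: "\<forall>x\<in>V. w x \<noteq> x" using assms(1) unfolding derangement_def by auto
  have finU: "finite (Uset V w)" using assms(2) unfolding Uset_def by simp
  have finE: "finite (Ed V)" unfolding Ed_def using assms(2) by (simp add: finite_subset[of _ "Pow V"] subset_iff)
  have "{E \<in> simple_graphs V. in_derangement_set V E w} = {G. G \<subseteq> Ed V \<and> (\<forall>t\<in>Uset V w. G \<inter> Aset w t \<noteq> {})}"
    unfolding simple_graphs_def Ed_def[symmetric] using equiv[OF perm assms(2) der] by auto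
  then have f: "freq V w = card {G. G \<subseteq> Ed V \<and> (\<forall>t\<in>Uset V w. G \<inter> Aset w t \<noteq> {})}" unfolding freq_def by simp
  have "card {G. G \<subseteq> Ed V \<and> (\<forall>t\<in>Uset V w. G \<inter> Aset w t \<noteq> {})} * 2^(\<Sum>t\<in>Uset V w. card (Aset w t))
      = 2^card (Ed V) * (\<Prod>t\<in>Uset V w. 2^card (Aset w t) - 1)"
    by (rule count_hit[OF finU finE]) (use Aset_props[OF perm assms(2)] disj[OF perm assms(2)] in auto)
  moreover have "(\<Sum>t\<in>Uset V w. card (Aset w t)) = (\<Sum>t\<in>Uset V w. card (rho w t))"
    using Aset_props(2)[OF perm assms(2)] by simp
  moreover have "(\<Prod>t\<in>Uset V w. 2^card (Aset w t) - 1) = (\<Prod>t\<in>Uset V w. 2^card (rho w t) - (1::nat))"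
    using Aset_props(2)[OF perm assms(2)] by simp
  ultimately show ?thesis using f by simp
qed

lemma freq_real:
  fixes V :: "'a::linorder set"
  assumes "derangement V w" "finite V"
  shows "real (freq V w) = 2^card (Ed V) * prod_list (map (\<lambda>c. 1 - 1 / 2 ^ c :: real) (theta V w))"
proof -
  define c where "c t = card (rho w t)" for t
  define U where "U = Uset V w"
  have n: "freq V w * 2^(\<Sum>t\<in>U. c t) = 2^card (Ed V) * (\<Prod>t\<in>U. 2^c t - 1)"
    using freq_nat[OF assms] unfolding c_def U_def .
  have "real (freq V w) * (\<Prod>t\<in>U. (2::real)^c t) = 2^card (Ed V) * (\<Prod>t\<in>U. (2::real)^c t - 1)"
  proof -
    have "real (freq V w * 2^(\<Sum>t\<in>U. c t)) = real (2^card (Ed V) * (\<Prod>t\<in>U. 2^c t - 1))" using n by simp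
    moreover have "real (2^(\<Sum>t\<in>U. c t)) = (\<Prod>t\<in>U. (2::real)^c t)" by (simp add: power_sum)
    moreover have "real (\<Prod>t\<in>U. 2^c t - 1) = (\<Prod>t\<in>U. (2::real)^c t - 1)"
      by (simp add: of_nat_diff)
    ultimately show ?thesis by simp
  qed
  moreover have pos: "(\<Prod>t\<in>U. (2::real)^c t) > 0" by (simp add: prod_pos)
  ultimately have "real (freq V w) = 2^card (Ed V) * (\<Prod>t\<in>U. (2::real)^c t - 1) / (\<Prod>t\<in>U. (2::real)^c t)"
    by (simp add: field_simps)
  also have "\<dots> = 2^card (Ed V) * (\<Prod>t\<in>U. ((2::real)^c t - 1) / 2^c t)"
    by (simp add: prod_dividef)
  also have "\<dots> = 2^card (Ed V) * (\<Prod>t\<in>U. 1 - 1 / (2::real)^c t)"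
    by (simp add: diff_divide_distrib)
  also have "\<dots> = 2^card (Ed V) * prod_list (map (\<lambda>c. 1 - 1 / 2 ^ c :: real) (theta V w))"
    using prod_theta[OF assms(2), of "\<lambda>c. 1 - 1 / 2 ^ c" w] unfolding U_def c_def by simp
  finally show ?thesis .
qed

theorem corollary3p8:
  fixes V :: "'a::linorder set" and w1 w2 :: "'a \<Rightarrow> 'a" and k :: nat
  assumes "finite V"
    and "derangement V w1" and "derangement V w2"
    and "num_cycles V w1 = k" and "num_cycles V w2 = k"
    and "list_all2 (\<le>) (theta V w1) (theta V w2)"
  shows "freq V w1 \<le> freq V w2 \<and> rate V w1 \<le> rate V w2"
proof -
  have "real (freq V w1) \<le> real (freq V w2)"
    unfolding freq_real[OF assms(2,1)] freq_real[OF assms(3,1)]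
    using mono_prod[OF assms(6)] by simp
  then have "freq V w1 \<le> freq V w2" by simp
  moreover have "rate V w1 \<le> rate V w2"
    unfolding rate_def using \<open>real (freq V w1) \<le> real (freq V w2)\<close> by (simp add: divide_right_mono)
  ultimately show ?thesis by simp
qed

end
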